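(* Let $\mathcal V=\{v^{(1)},\dots,v^{(p)}\}\subset(\mathbb{R}\cup\{-\infty\})^n$, none identically $-\infty$, and let $V$ be the matrix with columns $v^{(k)}$, with no row identically $-\infty$. Let $T$ be the operator $$T_i(x)=\inf_{k\in[p],\,V_{ik}\neq-\infty}\Big[-V_{ik}+\max_{j\in[n],\,j\neq i}(V_{jk}+x_j)\Big],\qquad i\in[n].$$ Let $a\in\mathbb{R}^n$. The following are equivalent: (1) $T(a)=\rho(T)+a$; (2) for every $i\in[n]$ there exists $k\in[p]$ such that $v^{(k)}\in S_i(a)$ and $\operatorname{dist}_H(v^{(k)},\mathcal H_a)=\operatorname{dist}_H(\mathcal V,\mathcal H_a)$. Moreover, if these assertions hold, then $\rho(T)=-\operatorname{dist}_H(\mathcal V,\mathcal H_a)$, $\mathcal H_a$ is an optimal solution of the problem $\min_b\operatorname{dist}_H(\mathcal V,\mathcal H_b)$, and $B(-a,\operatorname{dist}_H(\mathcal V,\mathcal H_a))$ is a Hilbert ball of maximal radius among Hilbert balls centered in $\mathbb{R}^n$ included in $\operatorname{Span}(\mathcal V)$.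
   Context: $\mathbb{R}_{\max}=\mathbb{R}\cup\{-\infty\}$, $-\infty+c=-\infty$, $\max\emptyset=-\infty$. $\mathcal H_a=\{y\in\mathbb{R}_{\max}^n:\max_i(a_i+y_i)\text{ is achieved at least twice}\}$; for $a\in\mathbb{R}^n$, the sectors are $S_i(a)=\{x\in\mathbb{R}_{\max}^n: x_i+a_i\ge x_j+a_j\ \forall j\in[n]\}$. Hilbert's projective metric $d(x,y)=\inf\{\lambda-\mu:\lambda,\mu\in\mathbb{R},\ \mu+y_j\le x_j\le\lambda+y_j\ \forall j\}$; $B(c,r)=\{x:d(c,x)\le r\}$; $\operatorname{dist}_H(x,B)=\inf_{y\in B}d(x,y)$, $\operatorname{dist}_H(A,B)=\sup_{x\in A}\operatorname{dist}_H(x,B)$. $\operatorname{Span}(\mathcal V)$ is the tropical cone generated by $\mathcal V$ (entrywise maxima of vectors $\alpha+v$, $v\in\mathcal V$, $\alpha\in\mathbb{R}_{\max}$). The minimum $\min_b$ is over $b\in\mathbb{R}_{\max}^n$ not identically $-\infty$. $\rho(T)=\sup\{\lambda\in\mathbb{R}\cup\{-\infty\}:\exists u\not\equiv-\infty,\ T(u)=\lambda+u\}$. *)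

theory Defs
  imports "HOL-Analysis.Analysis" "HOL-Library.Extended_Real"
begin

text \<open>Vectors over R_max = R \<union> {-\<infinity>}, indexed by a finite type 'n, are modelled as
  functions 'n \<Rightarrow> ereal that never take the value +\<infinity>.\<close>

definition rmax :: "('n \<Rightarrow> ereal) set" where
  "rmax = {x. \<forall>i. x i \<noteq> \<infinity>}"

definition tropH :: "('n::finite \<Rightarrow> ereal) \<Rightarrow> ('n \<Rightarrow> ereal) set" where
  "tropH a = {y \<in> rmax. \<exists>i j. i \<noteq> j \<and> a i + y i = (SUP k. a k + y k)
                                   \<and> a j + y j = (SUP k. a k + y k)}"

definition sector :: "'n \<Rightarrow> ('n \<Rightarrow> real) \<Rightarrow> ('n \<Rightarrow> ereal) set" where
  "sector i a = {x \<in> rmax. \<forall>j. x i + ereal (a i) \<ge> x j + ereal (a j)}"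

text \<open>Hilbert's projective metric (values in ereal; inf of the empty set is +\<infinity>).\<close>
definition hilbert_d :: "('n \<Rightarrow> ereal) \<Rightarrow> ('n \<Rightarrow> ereal) \<Rightarrow> ereal" where
  "hilbert_d x y = Inf {ereal (l - m) | l m.
      \<forall>j. ereal m + y j \<le> x j \<and> x j \<le> ereal l + y j}"

definition hball :: "('n \<Rightarrow> real) \<Rightarrow> ereal \<Rightarrow> ('n \<Rightarrow> ereal) set" where
  "hball c r = {x \<in> rmax. hilbert_d (\<lambda>i. ereal (c i)) x \<le> r}"

definition dist_pt :: "('n \<Rightarrow> ereal) \<Rightarrow> ('n \<Rightarrow> ereal) set \<Rightarrow> ereal" where
  "dist_pt x B = (INF y\<in>B. hilbert_d x y)"

definition dist_set :: "('n \<Rightarrow> ereal) set \<Rightarrow> ('n \<Rightarrow> ereal) set \<Rightarrow> ereal" where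
  "dist_set A B = (SUP x\<in>A. dist_pt x B)"

definition tspan :: "('p::finite \<Rightarrow> 'n \<Rightarrow> ereal) \<Rightarrow> ('n \<Rightarrow> ereal) set" where
  "tspan v = {x. \<exists>\<alpha>. (\<forall>k. \<alpha> k \<noteq> \<infinity>) \<and> x = (\<lambda>j. SUP k. \<alpha> k + v k j)}"

text \<open>The operator T (V_ik = v k i).\<close>
definition opT :: "('p::finite \<Rightarrow> 'n::finite \<Rightarrow> ereal) \<Rightarrow> ('n \<Rightarrow> ereal) \<Rightarrow> ('n \<Rightarrow> ereal)" where
  "opT v x = (\<lambda>i. INF k\<in>{k. v k i \<noteq> -\<infinity>}. - v k i + (SUP j\<in>{j. j \<noteq> i}. v k j + x j))"

definition specT :: "(('n \<Rightarrow> ereal) \<Rightarrow> ('n \<Rightarrow> ereal)) \<Rightarrow> ereal" where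
  "specT T = Sup {l. l \<noteq> \<infinity> \<and> (\<exists>u\<in>rmax. u \<noteq> (\<lambda>_. -\<infinity>) \<and> T u = (\<lambda>i. l + u i))}"

end

theory Submission imports Defs begin

lemma INF_attain:
  fixes f :: "'a \<Rightarrow> 'b::complete_linorder"
  assumes "finite A" "A \<noteq> {}"
  shows "\<exists>x\<in>A. (INF x\<in>A. f x) = f x"
proof -
  have "(INF x\<in>A. f x) = Min (f ` A)" using assms by (simp add: cInf_eq_Min)
  moreover have "Min (f ` A) \<in> f ` A" using assms by simp
  ultimately show ?thesis by auto
qed

lemma SUP_attain:
  fixes f :: "'a \<Rightarrow> 'b::complete_linorder"
  assumes "finite A" "A \<noteq> {}"
  shows "\<exists>x\<in>A. (SUP x\<in>A. f x) = f x"
proof -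
  have "(SUP x\<in>A. f x) = Max (f ` A)" using assms by (simp add: cSup_eq_Max)
  moreover have "Max (f ` A) \<in> f ` A" using assms by simp
  ultimately show ?thesis by auto
qed

lemma hd_nonneg:
  assumes "x j \<noteq> -\<infinity>" "x j \<noteq> \<infinity>"
  shows "0 \<le> hilbert_d x y"
  unfolding hilbert_d_def
proof (rule Inf_greatest, clarify)
  fix l m :: real
  assume h: "\<forall>j. ereal m + y j \<le> x j \<and> x j \<le> ereal l + y j"
  obtain xj where xj: "x j = ereal xj" using assms by (cases "x j") auto
  have a1: "ereal m + y j \<le> ereal xj" "ereal xj \<le> ereal l + y j" using h[rule_format, of j] xj by auto
  show "0 \<le> ereal (l - m)"
  proof (cases "y j")
    case (real r) then show ?thesis using a1 by simp
  next
    case PInf then show ?thesis using a1 by simp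
  next
    case MInf then show ?thesis using a1 by simp
  qed
qed

lemma dist_pt_nonneg:
  assumes "x j \<noteq> -\<infinity>" "x j \<noteq> \<infinity>"
  shows "0 \<le> dist_pt x B"
  unfolding dist_pt_def using hd_nonneg[of x j, OF assms] by (simp add: le_INF_iff)

lemma sup_ne_inf:
  fixes x b :: "'n::finite \<Rightarrow> ereal"
  assumes "x \<in> rmax" "b \<in> rmax"
  shows "(SUP j\<in>A. x j + b j) \<noteq> \<infinity>"
proof -
  have fin: "finite A" by simp
  show ?thesis
  proof (cases "A = {}")
    case True then show ?thesis by (simp add: bot_ereal_def)
  next
    case False
    then obtain j where "j \<in> A" "(SUP j\<in>A. x j + b j) = x j + b j" using SUP_attain[OF fin] by blast
    moreover have "x j \<noteq> \<infinity>" "b j \<noteq> \<infinity>" using assms unfolding rmax_def by auto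
    ultimately show ?thesis by simp
  qed
qed

lemma core_L1:
  fixes x b y :: "'n::finite \<Rightarrow> ereal"
  assumes "y \<in> tropH b" "x \<in> rmax" "b \<in> rmax" "x i = ereal xi" "b i = ereal bi"
    and h: "\<forall>j. ereal m + y j \<le> x j \<and> x j \<le> ereal l + y j"
  shows "\<exists>j xj bj. j \<noteq> i \<and> x j = ereal xj \<and> b j = ereal bj \<and> xi + bi \<le> l - m + xj + bj"
proof -
  from assms(1) obtain i1 i2 where yr: "y \<in> rmax" and ii: "i1 \<noteq> i2"
    "b i1 + y i1 = (SUP k. b k + y k)" "b i2 + y i2 = (SUP k. b k + y k)"
    unfolding tropH_def by blast
  obtain j where j: "j \<noteq> i" "b j + y j = (SUP k. b k + y k)" using ii by metis
  have le: "b i + y i \<le> b j + y j" using j(2) by (metis SUP_upper UNIV_I)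
  have "ereal xi \<le> ereal l + y i" using h assms(4) by metis
  moreover have "y i \<noteq> \<infinity>" using yr unfolding rmax_def by auto
  ultimately obtain yi where yi: "y i = ereal yi" by (cases "y i") auto
  have bjn: "b j \<noteq> \<infinity>" "y j \<noteq> \<infinity>" using yr assms(3) unfolding rmax_def by auto
  moreover have "b j + y j \<noteq> -\<infinity>" using le yi assms(5) bjn by (cases "b j"; cases "y j") auto
  ultimately obtain bj yj where bj: "b j = ereal bj" "y j = ereal yj"
    by (cases "b j"; cases "y j") auto
  have "ereal m + y j \<le> x j" using h by blast
  moreover have "x j \<noteq> \<infinity>" using assms(2) unfolding rmax_def by auto
  ultimately obtain xj where xj: "x j = ereal xj" using bj by (cases "x j") auto
  have r1: "bi + yi \<le> bj + yj" using le yi bj assms(5) by simp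
  have r2: "m + yj \<le> xj" using h bj xj by (metis plus_ereal.simps(1) ereal_less_eq(3))
  have r3: "xi \<le> l + yi" using h yi assms(4) by (metis plus_ereal.simps(1) ereal_less_eq(3))
  show ?thesis using r1 r2 r3 j(1) xj bj(1) by (intro exI[of _ j] exI[of _ xj] exI[of _ bj]) auto
qed

lemma L1:
  fixes x b :: "'n::finite \<Rightarrow> ereal"
  assumes "x \<in> rmax" "b \<in> rmax" "x i = ereal xi" "b i = ereal bi"
  shows "x i + b i \<le> dist_pt x (tropH b) + (SUP j\<in>{j. j\<noteq>i}. x j + b j)"
proof -
  define S where "S = (SUP j\<in>{j. j\<noteq>i}. x j + b j)"
  have Sn: "S \<noteq> \<infinity>" unfolding S_def using sup_ne_inf[OF assms(1,2)] by blast
  have Sup: "x j + b j \<le> S" if "j \<noteq> i" for j unfolding S_def using that by (auto intro: SUP_upper)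
  have "x i + b i \<le> dist_pt x (tropH b) + S"
  proof (cases S)
    case MInf
    have "hilbert_d x y = \<infinity>" if y: "y \<in> tropH b" for y
    proof -
      have E: "{ereal (l - m) | l m. \<forall>j. ereal m + y j \<le> x j \<and> x j \<le> ereal l + y j} = {}"
      proof (rule ccontr)
        assume "{ereal (l - m) | l m. \<forall>j. ereal m + y j \<le> x j \<and> x j \<le> ereal l + y j} \<noteq> {}"
        then obtain l m where "\<forall>j. ereal m + y j \<le> x j \<and> x j \<le> ereal l + y j" by blast
        from core_L1[OF y assms(1-4) this] obtain j xj bj where
          "j \<noteq> i" "x j = ereal xj" "b j = ereal bj" by blast
        with Sup[of j] MInf show False by simp
      qed
      show ?thesis unfolding hilbert_d_def E by (simp add: top_ereal_def)
    qed
    then have "dist_pt x (tropH b) = \<infinity>" unfolding dist_pt_def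
      by (simp add: top_ereal_def[symmetric])
    then show ?thesis using MInf by simp
  next
    case (real s)
    have "ereal (xi + bi - s) \<le> dist_pt x (tropH b)"
      unfolding dist_pt_def hilbert_d_def
    proof (rule INF_greatest, rule Inf_greatest, clarify)
      fix y l m
      assume y: "y \<in> tropH b" and h: "\<forall>j. ereal m + y j \<le> x j \<and> x j \<le> ereal l + y j"
      from core_L1[OF y assms(1-4) h] obtain j xj bj where
        j: "j \<noteq> i" "x j = ereal xj" "b j = ereal bj" "xi + bi \<le> l - m + xj + bj" by blast
      have "xj + bj \<le> s" using Sup[OF j(1)] j(2,3) real by simp
      then show "ereal (xi + bi - s) \<le> ereal (l - m)" using j(4) by simp
    qed
    then show ?thesis using real assms(3,4)
      by (cases "dist_pt x (tropH b)") auto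
  next
    case PInf then show ?thesis using Sn by simp
  qed
  then show ?thesis unfolding S_def .
qed

lemma L2:
  fixes x :: "'n::finite \<Rightarrow> ereal" and a :: "'n \<Rightarrow> real"
  assumes "x \<in> rmax" "x i = ereal xi" "\<forall>j. x j + ereal (a j) \<le> x i + ereal (a i)"
    "(SUP j\<in>{j. j\<noteq>i}. x j + ereal (a j)) = ereal s"
  shows "dist_pt x (tropH (\<lambda>i. ereal (a i))) + ereal s \<le> x i + ereal (a i)"
proof -
  have ne: "{j. j\<noteq>i} \<noteq> {}"
  proof
    assume "{j. j\<noteq>i} = {}"
    then show False using assms(4) by (simp add: bot_ereal_def)
  qed
  obtain j where j: "j \<noteq> i" "x j + ereal (a j) = ereal s"
    using SUP_attain[OF _ ne, of "\<lambda>j. x j + ereal (a j)"] assms(4) by auto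
  have xj: "x j = ereal (s - a j)" using j(2) by (cases "x j") auto
  define g where "g = xi + a i - s"
  have g0: "0 \<le> g" using assms(3)[rule_format, of j] j(2) assms(2) unfolding g_def by simp
  define y where "y = x(i := ereal (xi - g))"
  have yr: "y \<in> rmax" using assms(1) unfolding y_def rmax_def by auto
  have yi: "ereal (a i) + y i = ereal s" unfolding y_def g_def by simp
  have yk: "ereal (a k) + y k \<le> ereal s" if "k \<noteq> i" for k
  proof -
    have "x k + ereal (a k) \<le> (SUP j\<in>{j. j\<noteq>i}. x j + ereal (a j))"
      by (rule SUP_upper) (use that in simp)
    then have "x k + ereal (a k) \<le> ereal s" using assms(4) by simp
    then show ?thesis unfolding y_def using that by (simp add: add.commute)
  qed
  have yj: "ereal (a j) + y j = ereal s" unfolding y_def using j xj by simp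
  have Ss: "(SUP k. ereal (a k) + y k) = ereal s"
  proof (rule antisym)
    show "(SUP k. ereal (a k) + y k) \<le> ereal s"
    proof (rule SUP_least)
      fix k show "ereal (a k) + y k \<le> ereal s" using yi yk[of k] by (cases "k = i") auto
    qed
    have "ereal (a j) + y j \<le> (SUP k. ereal (a k) + y k)" by (rule SUP_upper) simp
    then show "ereal s \<le> (SUP k. ereal (a k) + y k)" using yj by simp
  qed
  have ex: "\<exists>i' j'. i' \<noteq> j' \<and> ereal (a i') + y i' = (SUP k. ereal (a k) + y k)
      \<and> ereal (a j') + y j' = (SUP k. ereal (a k) + y k)"
    using j(1) yi yj Ss by (intro exI[of _ i] exI[of _ j]) simp
  have yH: "y \<in> tropH (\<lambda>i. ereal (a i))" unfolding tropH_def
    using yr ex by simp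
  have P: "\<forall>k. ereal 0 + y k \<le> x k \<and> x k \<le> ereal g + y k"
  proof
    fix k
    show "ereal 0 + y k \<le> x k \<and> x k \<le> ereal g + y k"
    proof (cases "k = i")
      case True then show ?thesis unfolding y_def using g0 assms(2) by simp
    next
      case False
      have "x k \<noteq> \<infinity>" using assms(1) unfolding rmax_def by auto
      then show ?thesis unfolding y_def using g0 False by (cases "x k") auto
    qed
  qed
  have "hilbert_d x y \<le> ereal (g - 0)" unfolding hilbert_d_def
    by (rule Inf_lower) (use P in blast)
  moreover have "dist_pt x (tropH (\<lambda>i. ereal (a i))) \<le> hilbert_d x y"
    unfolding dist_pt_def using yH by (rule INF_lower)
  ultimately have "dist_pt x (tropH (\<lambda>i. ereal (a i))) \<le> ereal g" by simp
  then show ?thesis using assms(2) unfolding g_def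
    by (cases "dist_pt x (tropH (\<lambda>i. ereal (a i)))") auto
qed

lemma F1:
  fixes v :: "'p::finite \<Rightarrow> 'n::finite \<Rightarrow> ereal" and b :: "'n \<Rightarrow> ereal"
  assumes col: "\<forall>k. v k \<in> rmax" and br: "b \<in> rmax" and d0: "0 \<le> dist_set (range v) (tropH b)"
  shows "- dist_set (range v) (tropH b) + b i \<le> opT v b i"
proof (cases "b i")
  case MInf
  have "- dist_set (range v) (tropH b) \<noteq> \<infinity>" using d0
    by (cases "dist_set (range v) (tropH b)") auto
  then show ?thesis using MInf by (cases "- dist_set (range v) (tropH b)") auto
next
  case PInf then show ?thesis using br unfolding rmax_def by auto
next
  case (real bi)
  define \<delta> where "\<delta> = dist_set (range v) (tropH b)"
  show ?thesis unfolding opT_def \<delta>_def[symmetric]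
  proof (rule INF_greatest, clarify)
    fix k assume vk: "v k i \<noteq> - \<infinity>"
    have vkr: "v k \<in> rmax" using col by blast
    then obtain vi where vi: "v k i = ereal vi" using vk unfolding rmax_def by (cases "v k i") auto
    define S where "S = (SUP j\<in>{j. j\<noteq>i}. v k j + b j)"
    have Sn: "S \<noteq> \<infinity>" unfolding S_def using sup_ne_inf[OF vkr br] by blast
    have "v k i + b i \<le> dist_pt (v k) (tropH b) + S" unfolding S_def by (rule L1[OF vkr br vi real])
    moreover have "dist_pt (v k) (tropH b) \<le> \<delta>" unfolding \<delta>_def dist_set_def
      by (rule SUP_upper) simp
    ultimately have le: "ereal (vi + bi) \<le> \<delta> + S" using vi real
      by (metis add_right_mono order_trans plus_ereal.simps(1))
    have "0 \<le> \<delta>" using d0 unfolding \<delta>_def .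
    then show "- \<delta> + b i \<le> - v k i + S" using le Sn vi real
      by (cases \<delta>; cases S) auto
  qed
qed

lemma TB:
  fixes v :: "'p::finite \<Rightarrow> 'n::finite \<Rightarrow> ereal" and a :: "'n \<Rightarrow> real"
  assumes vkr: "v k \<in> rmax" and vi: "v k i = ereal vi"
    and sec: "\<forall>j. v k j + ereal (a j) \<le> v k i + ereal (a i)"
    and d: "\<delta> \<le> dist_pt (v k) (tropH (\<lambda>i. ereal (a i)))" and d0: "0 \<le> \<delta>"
  shows "opT v (\<lambda>i. ereal (a i)) i \<le> - \<delta> + ereal (a i)"
proof -
  define S where "S = (SUP j\<in>{j. j\<noteq>i}. v k j + ereal (a j))"
  have ar: "(\<lambda>i. ereal (a i)) \<in> rmax" unfolding rmax_def by simp
  have Sn: "S \<noteq> \<infinity>" unfolding S_def using sup_ne_inf[OF vkr ar] by blast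
  have "opT v (\<lambda>i. ereal (a i)) i \<le> - v k i + S" unfolding opT_def S_def
    by (rule INF_lower) (use vi in simp)
  moreover have "- v k i + S \<le> - \<delta> + ereal (a i)"
  proof (cases S)
    case MInf then show ?thesis using vi by simp
  next
    case PInf then show ?thesis using Sn by simp
  next
    case (real s)
    have "dist_pt (v k) (tropH (\<lambda>i. ereal (a i))) + ereal s \<le> v k i + ereal (a i)"
      using L2[OF vkr vi sec] real unfolding S_def by simp
    then have "\<delta> + ereal s \<le> ereal (vi + a i)" using d vi
      by (metis add_right_mono order_trans plus_ereal.simps(1))
    then show ?thesis using real vi d0 by (cases \<delta>) auto
  qed
  ultimately show ?thesis by (rule order_trans)
qed

lemma CW:
  fixes v :: "'p::finite \<Rightarrow> 'n::finite \<Rightarrow> ereal" and a :: "'n \<Rightarrow> real"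
  assumes col: "\<forall>k. v k \<in> rmax" and row: "\<forall>i. \<exists>k. v k i \<noteq> -\<infinity>"
    and ur: "u \<in> rmax" and un: "u j0 \<noteq> -\<infinity>"
    and h1: "\<forall>i. l1 + u i \<le> opT v u i"
    and h2: "\<forall>i. opT v (\<lambda>i. ereal (a i)) i \<le> l2 + ereal (a i)"
  shows "l1 \<le> l2"
proof -
  obtain i0 where i0: "(SUP i. u i - ereal (a i)) = u i0 - ereal (a i0)"
    using SUP_attain[of UNIV "\<lambda>i. u i - ereal (a i)"] by auto
  have "u j0 - ereal (a j0) \<le> u i0 - ereal (a i0)" unfolding i0[symmetric]
    by (rule SUP_upper) simp
  moreover have "u j0 \<noteq> \<infinity>" "u i0 \<noteq> \<infinity>" using ur unfolding rmax_def by auto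
  ultimately have "u i0 \<noteq> -\<infinity>" using un by (cases "u i0"; cases "u j0") auto
  then obtain r where r: "u i0 = ereal r" using \<open>u i0 \<noteq> \<infinity>\<close> by (cases "u i0") auto
  define s where "s = r - a i0"
  have s: "u i0 = ereal (s + a i0)" using r unfolding s_def by simp
  have ule: "u j \<le> ereal (s + a j)" for j
  proof -
    have "u j - ereal (a j) \<le> u i0 - ereal (a i0)" unfolding i0[symmetric]
      by (rule SUP_upper) simp
    then show ?thesis using s by (cases "u j") auto
  qed
  have ne: "{k. v k i0 \<noteq> -\<infinity>} \<noteq> {}" using row by auto
  obtain k0 where k0: "v k0 i0 \<noteq> -\<infinity>"
    "opT v (\<lambda>i. ereal (a i)) i0 = - v k0 i0 + (SUP j\<in>{j. j\<noteq>i0}. v k0 j + ereal (a j))"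
    unfolding opT_def using INF_attain[OF _ ne] by fastforce
  obtain vi where vi: "v k0 i0 = ereal vi" using k0(1) col unfolding rmax_def
    by (cases "v k0 i0") auto
  have "(SUP j\<in>{j. j\<noteq>i0}. v k0 j + u j) \<le> ereal s + (SUP j\<in>{j. j\<noteq>i0}. v k0 j + ereal (a j))"
  proof (rule SUP_least)
    fix j assume j: "j \<in> {j. j\<noteq>i0}"
    have "v k0 j + u j \<le> v k0 j + ereal (s + a j)" by (rule add_left_mono[OF ule])
    also have "\<dots> = ereal s + (v k0 j + ereal (a j))" by (cases "v k0 j") auto
    also have "\<dots> \<le> ereal s + (SUP j\<in>{j. j\<noteq>i0}. v k0 j + ereal (a j))"
      by (rule add_left_mono, rule SUP_upper[OF j])
    finally show "v k0 j + u j \<le> ereal s + (SUP j\<in>{j. j\<noteq>i0}. v k0 j + ereal (a j))" .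
  qed
  then have "- v k0 i0 + (SUP j\<in>{j. j\<noteq>i0}. v k0 j + u j) \<le>
      - v k0 i0 + (ereal s + (SUP j\<in>{j. j\<noteq>i0}. v k0 j + ereal (a j)))"
    by (rule add_left_mono)
  also have "\<dots> = ereal s + opT v (\<lambda>i. ereal (a i)) i0" unfolding k0(2) using vi
    by (simp add: ac_simps)
  also have "\<dots> \<le> ereal s + (l2 + ereal (a i0))" by (rule add_left_mono, rule h2[rule_format])
  finally have A: "- v k0 i0 + (SUP j\<in>{j. j\<noteq>i0}. v k0 j + u j) \<le> ereal s + (l2 + ereal (a i0))" .
  have "opT v u i0 \<le> - v k0 i0 + (SUP j\<in>{j. j\<noteq>i0}. v k0 j + u j)" unfolding opT_def
    by (rule INF_lower) (use k0 in simp)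
  with A h1 have "l1 + u i0 \<le> ereal s + (l2 + ereal (a i0))" by (metis order_trans)
  then have "l1 + ereal (s + a i0) \<le> l2 + ereal (s + a i0)" using s
    by (simp add: ac_simps)
  then show ?thesis by (simp add: ereal_add_le_add_iff2)
qed

lemma Teq2:
  fixes v :: "'p::finite \<Rightarrow> 'n::finite \<Rightarrow> ereal" and a :: "'n \<Rightarrow> real"
  assumes col: "\<forall>k. v k \<in> rmax" and row: "\<forall>i. \<exists>k. v k i \<noteq> -\<infinity>"
    and d0: "0 \<le> dist_set (range v) (tropH (\<lambda>i. ereal (a i)))"
    and heq: "\<forall>i. opT v (\<lambda>i. ereal (a i)) i = - dist_set (range v) (tropH (\<lambda>i. ereal (a i))) + ereal (a i)"
  shows "\<exists>k. v k \<in> sector i a \<and> dist_pt (v k) (tropH (\<lambda>i. ereal (a i))) = dist_set (range v) (tropH (\<lambda>i. ereal (a i)))"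
proof -
  define \<delta> where "\<delta> = dist_set (range v) (tropH (\<lambda>i. ereal (a i)))"
  define H where "H = tropH (\<lambda>i. ereal (a i))"
  have ne: "{k. v k i \<noteq> -\<infinity>} \<noteq> {}" using row by auto
  obtain k where k: "v k i \<noteq> -\<infinity>"
    "opT v (\<lambda>i. ereal (a i)) i = - v k i + (SUP j\<in>{j. j\<noteq>i}. v k j + ereal (a j))"
    unfolding opT_def using INF_attain[OF _ ne] by fastforce
  have vkr: "v k \<in> rmax" using col by blast
  obtain vi where vi: "v k i = ereal vi" using k(1) vkr unfolding rmax_def
    by (cases "v k i") auto
  define S where "S = (SUP j\<in>{j. j\<noteq>i}. v k j + ereal (a j))"
  have ar: "(\<lambda>i. ereal (a i)) \<in> rmax" unfolding rmax_def by simp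
  have Sn: "S \<noteq> \<infinity>" unfolding S_def using sup_ne_inf[OF vkr ar] by blast
  have L: "v k i + ereal (a i) \<le> dist_pt (v k) H + S" unfolding S_def H_def
    by (rule L1[OF vkr ar vi]) simp
  have dle: "dist_pt (v k) H \<le> \<delta>" unfolding \<delta>_def dist_set_def H_def
    by (rule SUP_upper) simp
  have eq: "- ereal vi + S = - \<delta> + ereal (a i)" using heq k(2) vi unfolding S_def \<delta>_def by simp
  have Sj: "v k j + ereal (a j) \<le> S" if "j \<noteq> i" for j unfolding S_def
    by (rule SUP_upper) (use that in simp)
  have dd0: "0 \<le> \<delta>" using d0 unfolding \<delta>_def .
  have "S \<le> v k i + ereal (a i) \<and> dist_pt (v k) H = \<delta>"
  proof (cases S)
    case MInf
    then have "\<delta> = \<infinity>" using eq dd0 by (cases \<delta>) auto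
    moreover have "dist_pt (v k) H = \<infinity>" using L MInf vi by (cases "dist_pt (v k) H") auto
    ultimately show ?thesis using MInf by simp
  next
    case PInf then show ?thesis using Sn by simp
  next
    case (real s)
    then obtain d where d: "\<delta> = ereal d" "d = vi + a i - s" using eq dd0 by (cases \<delta>) auto
    have "ereal (vi + a i) \<le> dist_pt (v k) H + ereal s" using L real vi by simp
    then have "ereal d \<le> dist_pt (v k) H" using d(2) by (cases "dist_pt (v k) H") auto
    then show ?thesis using dle d dd0 real vi by auto
  qed
  then have "v k \<in> sector i a" and "dist_pt (v k) H = \<delta>"
    unfolding sector_def using vkr Sj by (auto, metis order.trans order_refl)
  then show ?thesis unfolding \<delta>_def H_def by blast
qed

lemma specEq:
  fixes v :: "'p::finite \<Rightarrow> 'n::finite \<Rightarrow> ereal" and a :: "'n \<Rightarrow> real"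
  assumes col: "\<forall>k. v k \<in> rmax" and row: "\<forall>i. \<exists>k. v k i \<noteq> -\<infinity>"
    and heq: "\<forall>i. opT v (\<lambda>i. ereal (a i)) i = l0 + ereal (a i)" and l0: "l0 \<noteq> \<infinity>"
  shows "specT (opT v) = l0"
  unfolding specT_def
proof (rule antisym)
  show "Sup {l. l \<noteq> \<infinity> \<and> (\<exists>u\<in>rmax. u \<noteq> (\<lambda>_. - \<infinity>) \<and> opT v u = (\<lambda>i. l + u i))} \<le> l0"
  proof (rule Sup_least, clarify)
    fix l u assume u: "u \<in> rmax" "u \<noteq> (\<lambda>_. - \<infinity>)" "opT v u = (\<lambda>i. l + u i)"
    then obtain j0 where "u j0 \<noteq> -\<infinity>" by auto
    show "l \<le> l0"
      by (rule CW[where a=a, OF col row u(1) \<open>u j0 \<noteq> -\<infinity>\<close>]) (use u(3) heq in auto)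
  qed
  show "l0 \<le> Sup {l. l \<noteq> \<infinity> \<and> (\<exists>u\<in>rmax. u \<noteq> (\<lambda>_. - \<infinity>) \<and> opT v u = (\<lambda>i. l + u i))}"
  proof (rule Sup_upper, intro CollectI conjI l0 bexI[of _ "\<lambda>i. ereal (a i)"])
    show "(\<lambda>i. ereal (a i)) \<noteq> (\<lambda>_. - \<infinity>)" by (metis MInfty_neq_ereal(1))
    show "opT v (\<lambda>i. ereal (a i)) = (\<lambda>i. l0 + ereal (a i))" using heq by auto
    show "(\<lambda>i. ereal (a i)) \<in> rmax" unfolding rmax_def by simp
  qed
qed

lemma span_ball_le:
  fixes v :: "'p::finite \<Rightarrow> 'n::finite \<Rightarrow> ereal" and a c :: "'n \<Rightarrow> real"
  assumes col: "\<forall>k. v k \<in> rmax" and row: "\<forall>i. \<exists>k. v k i \<noteq> -\<infinity>"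
    and d0: "0 \<le> \<delta>"
    and heq: "\<forall>i. opT v (\<lambda>i. ereal (a i)) i = - \<delta> + ereal (a i)"
    and sub: "hball c (ereal r) \<subseteq> tspan v"
  shows "ereal r \<le> \<delta>"
proof (cases "r < 0")
  case True then show ?thesis using d0 by (cases \<delta>) auto
next
  case False
  then have r0: "0 \<le> r" by simp
  have key: "opT v (\<lambda>i. ereal (- c i)) i \<le> ereal (- r) + ereal (- c i)" for i
  proof -
    define x where "x = (\<lambda>j. ereal (c j + (if j = i then r else 0)))"
    have P: "\<forall>j. ereal (- r) + x j \<le> ereal (c j) \<and> ereal (c j) \<le> ereal 0 + x j"
      unfolding x_def using r0 by auto
    have "hilbert_d (\<lambda>i. ereal (c i)) x \<le> ereal (0 - (- r))" unfolding hilbert_d_def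
      by (rule Inf_lower) (use P in blast)
    moreover have "x \<in> rmax" unfolding x_def rmax_def by simp
    ultimately have "x \<in> hball c (ereal r)" unfolding hball_def by simp
    with sub have "x \<in> tspan v" by blast
    then obtain \<alpha> where al: "\<forall>k. \<alpha> k \<noteq> \<infinity>" "x = (\<lambda>j. SUP k. \<alpha> k + v k j)"
      unfolding tspan_def by blast
    have xj: "(SUP k. \<alpha> k + v k j) = x j" for j using al(2) by metis
    obtain k where k: "(SUP k. \<alpha> k + v k i) = \<alpha> k + v k i"
      using SUP_attain[of UNIV "\<lambda>k. \<alpha> k + v k i"] by auto
    have ki: "\<alpha> k + v k i = ereal (c i + r)" using xj[of i] k unfolding x_def by simp
    have "v k i \<noteq> \<infinity>" using col unfolding rmax_def by auto
    then obtain al vi where alvi: "\<alpha> k = ereal al" "v k i = ereal vi"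
      using ki al(1) by (cases "\<alpha> k"; cases "v k i") auto
    have sum: "al + vi = c i + r" using ki alvi by simp
    have kj: "v k j + ereal (- c j) \<le> ereal (- al)" if "j \<noteq> i" for j
    proof -
      have "\<alpha> k + v k j \<le> (SUP k. \<alpha> k + v k j)" by (rule SUP_upper) simp
      then have "\<alpha> k + v k j \<le> ereal (c j)" using xj[of j] that unfolding x_def by simp
      then show ?thesis using alvi by (cases "v k j") auto
    qed
    have "opT v (\<lambda>i. ereal (- c i)) i \<le> - v k i + (SUP j\<in>{j. j\<noteq>i}. v k j + ereal (- c j))"
      unfolding opT_def by (rule INF_lower) (use alvi in simp)
    also have "\<dots> \<le> - v k i + ereal (- al)"
      by (rule add_left_mono, rule SUP_least) (use kj in simp)
    also have "\<dots> = ereal (- r) + ereal (- c i)" using alvi sum by simp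
    finally show ?thesis .
  qed
  have "- \<delta> \<le> ereal (- r)"
  proof (rule CW[where a="\<lambda>i. - c i", OF col row, of "\<lambda>i. ereal (a i)" undefined])
    show "(\<lambda>i. ereal (a i)) \<in> rmax" unfolding rmax_def by simp
    show "ereal (a undefined) \<noteq> - \<infinity>" by simp
    show "\<forall>i. - \<delta> + ereal (a i) \<le> opT v (\<lambda>i. ereal (a i)) i" using heq by simp
    show "\<forall>i. opT v (\<lambda>i. ereal (- c i)) i \<le> ereal (- r) + ereal (- c i)" using key by blast
  qed
  then show ?thesis by (cases \<delta>) auto
qed

lemma ball_in_span:
  fixes v :: "'p::finite \<Rightarrow> 'n::finite \<Rightarrow> ereal" and a :: "'n \<Rightarrow> real"
  assumes col: "\<forall>k. v k \<in> rmax" and nz: "\<forall>k. \<exists>i. v k i \<noteq> -\<infinity>"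
    and cond: "\<forall>i. \<exists>k. v k \<in> sector i a \<and> dist_pt (v k) (tropH (\<lambda>i. ereal (a i))) = \<delta>"
  shows "hball (\<lambda>i. - a i) \<delta> \<subseteq> tspan v"
proof
  fix x assume "x \<in> hball (\<lambda>i. - a i) \<delta>"
  then have xr: "x \<in> rmax" and hx: "hilbert_d (\<lambda>i. ereal (- a i)) x \<le> \<delta>"
    unfolding hball_def by auto
  have xn: "x j \<noteq> \<infinity>" for j using xr unfolding rmax_def by auto
  define \<alpha> where "\<alpha> k = (INF j\<in>{j. v k j \<noteq> -\<infinity>}. x j - v k j)" for k
  have vn: "v k j \<noteq> \<infinity>" for k j using col unfolding rmax_def by auto
  have alle: "\<alpha> k \<le> x j - v k j" if "v k j \<noteq> -\<infinity>" for k j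
    unfolding \<alpha>_def by (rule INF_lower) (use that in simp)
  have an: "\<alpha> k \<noteq> \<infinity>" for k
  proof -
    obtain j where j: "v k j \<noteq> -\<infinity>" using nz by blast
    have "x j - v k j \<noteq> \<infinity>" using xn[of j] vn[of k j] j by (cases "x j"; cases "v k j") auto
    then show ?thesis using alle[OF j] by auto
  qed
  have le: "\<alpha> k + v k j \<le> x j" for k j
  proof (cases "v k j = -\<infinity>")
    case True then show ?thesis using an[of k] by (cases "\<alpha> k") auto
  next
    case False
    then obtain w where w: "v k j = ereal w" using vn[of k j] by (cases "v k j") auto
    show ?thesis using alle[OF False] w by (cases "\<alpha> k"; cases "x j") auto
  qed
  have ge: "\<exists>k. x i \<le> \<alpha> k + v k i" for i
  proof -
    obtain k where k: "v k \<in> sector i a" "dist_pt (v k) (tropH (\<lambda>i. ereal (a i))) = \<delta>"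
      using cond by blast
    have vkr: "v k \<in> rmax" and sec: "\<forall>j. v k j + ereal (a j) \<le> v k i + ereal (a i)"
      using k(1) unfolding sector_def by auto
    obtain j1 where j1: "v k j1 \<noteq> -\<infinity>" using nz by blast
    have "v k j1 + ereal (a j1) \<noteq> -\<infinity>" using j1 by (cases "v k j1") auto
    then have "v k i \<noteq> -\<infinity>" using sec[rule_format, of j1] by auto
    then obtain vi where vi: "v k i = ereal vi" using vn[of k i] by (cases "v k i") auto
    have "0 \<le> dist_pt (v k) (tropH (\<lambda>i. ereal (a i)))"
      by (rule dist_pt_nonneg[of _ i]) (use vi in auto)
    then have dpos: "0 \<le> \<delta>" using k(2) by simp
    have K: "x i - ereal vi \<le> x j - v k j" if j: "v k j \<noteq> -\<infinity>" for j
    proof (cases "j = i")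
      case True then show ?thesis using vi by simp
    next
      case False
      obtain vj where vj: "v k j = ereal vj" using j vn[of k j] by (cases "v k j") auto
      define S where "S = (SUP j\<in>{j. j\<noteq>i}. v k j + ereal (a j))"
      have ar: "(\<lambda>i. ereal (a i)) \<in> rmax" unfolding rmax_def by simp
      have Sn: "S \<noteq> \<infinity>" unfolding S_def using sup_ne_inf[OF vkr ar] by blast
      have Sj: "ereal (vj + a j) \<le> S" unfolding S_def using vj False
        by (metis (mono_tags, lifting) SUP_upper mem_Collect_eq plus_ereal.simps(1))
      then obtain s where s: "S = ereal s" using Sn by (cases S) auto
      have "dist_pt (v k) (tropH (\<lambda>i. ereal (a i))) + ereal s \<le> v k i + ereal (a i)"
        using L2[OF vkr vi sec] s unfolding S_def by simp
      then have "\<delta> + ereal s \<le> ereal (vi + a i)" using k(2) vi by simp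
      then obtain d where d: "\<delta> = ereal d" "d + s \<le> vi + a i" using dpos by (cases \<delta>) auto
      have vjs: "vj + a j \<le> s" using Sj s by simp
      define Q where "Q = {ereal (l - m) |l m. \<forall>j. ereal m + x j \<le> ereal (- a j) \<and> ereal (- a j) \<le> ereal l + x j}"
      have hQ: "hilbert_d (\<lambda>i. ereal (- a i)) x = Inf Q" unfolding hilbert_d_def Q_def by simp
      have "Q \<noteq> {}"
      proof
        assume "Q = {}"
        then show False using hx hQ d(1) by (simp add: top_ereal_def)
      qed
      then obtain l0 m0 where lm0: "\<forall>j. ereal m0 + x j \<le> ereal (- a j) \<and> ereal (- a j) \<le> ereal l0 + x j"
        unfolding Q_def by blast
      have fin: "x q \<noteq> -\<infinity>" for q using lm0[rule_format, of q] by auto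
      obtain xi xj where xij: "x i = ereal xi" "x j = ereal xj" using fin[of i] fin[of j] xn[of i] xn[of j]
        by (cases "x i"; cases "x j") auto
      have "ereal (xi + a i - xj - a j) \<le> Inf Q" unfolding Q_def
      proof (rule Inf_greatest, clarify)
        fix l m assume h: "\<forall>j. ereal m + x j \<le> ereal (- a j) \<and> ereal (- a j) \<le> ereal l + x j"
        have "m + xi \<le> - a i" using h[rule_format, of i] xij by simp
        moreover have "- a j \<le> l + xj" using h[rule_format, of j] xij by simp
        ultimately show "ereal (xi + a i - xj - a j) \<le> ereal (l - m)" by simp
      qed
      then have "ereal (xi + a i - xj - a j) \<le> ereal d" using hx hQ d(1) by (metis order_trans)
      then have "xi + a i - xj - a j \<le> d" by simp
      then show ?thesis using d(2) vjs xij vj by simp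
    qed
    have "x i - ereal vi \<le> \<alpha> k" unfolding \<alpha>_def by (rule INF_greatest) (use K in simp)
    then have "x i \<le> \<alpha> k + v k i" using vi xn[of i] by (cases "x i"; cases "\<alpha> k") auto
    then show ?thesis by blast
  qed
  show "x \<in> tspan v" unfolding tspan_def
  proof (intro CollectI exI[of _ \<alpha>] conjI allI an ext)
    fix j
    show "x j = (SUP k. \<alpha> k + v k j)"
    proof (rule antisym)
      obtain k where "x j \<le> \<alpha> k + v k j" using ge by blast
      also have "\<dots> \<le> (SUP k. \<alpha> k + v k j)" by (rule SUP_upper) simp
      finally show "x j \<le> (SUP k. \<alpha> k + v k j)" .
      show "(SUP k. \<alpha> k + v k j) \<le> x j" by (rule SUP_least) (rule le)
    qed
  qed
qed

lemma dset_nonneg: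
  fixes v :: "'p::finite \<Rightarrow> 'n::finite \<Rightarrow> ereal"
  assumes col: "\<forall>k. v k \<in> rmax" and nz: "\<forall>k. \<exists>i. v k i \<noteq> -\<infinity>"
  shows "0 \<le> dist_set (range v) B"
proof -
  obtain i where i: "v undefined i \<noteq> -\<infinity>" using nz by blast
  have "v undefined i \<noteq> \<infinity>" using col unfolding rmax_def by auto
  then have "0 \<le> dist_pt (v undefined) B" using i by (rule dist_pt_nonneg[rotated])
  also have "\<dots> \<le> dist_set (range v) B" unfolding dist_set_def by (rule SUP_upper) simp
  finally show ?thesis .
qed

theorem theorem4p8:
  fixes v :: "'p::finite \<Rightarrow> 'n::finite \<Rightarrow> ereal" and a :: "'n \<Rightarrow> real"
  assumes "\<forall>k. v k \<in> rmax"
    and "\<forall>k. \<exists>i. v k i \<noteq> -\<infinity>"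
    and "\<forall>i. \<exists>k. v k i \<noteq> -\<infinity>"
  shows "(opT v (\<lambda>i. ereal (a i)) = (\<lambda>i. specT (opT v) + ereal (a i)) \<longleftrightarrow>
           (\<forall>i. \<exists>k. v k \<in> sector i a \<and>
              dist_pt (v k) (tropH (\<lambda>i. ereal (a i))) = dist_set (range v) (tropH (\<lambda>i. ereal (a i)))))
       \<and> (opT v (\<lambda>i. ereal (a i)) = (\<lambda>i. specT (opT v) + ereal (a i)) \<longrightarrow>
          (
           specT (opT v) = - dist_set (range v) (tropH (\<lambda>i. ereal (a i)))
         \<and> (\<forall>b\<in>rmax. b \<noteq> (\<lambda>_. -\<infinity>) \<longrightarrow>
              dist_set (range v) (tropH (\<lambda>i. ereal (a i))) \<le> dist_set (range v) (tropH b))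
         \<and> hball (\<lambda>i. - a i) (dist_set (range v) (tropH (\<lambda>i. ereal (a i)))) \<subseteq> tspan v
         \<and> (\<forall>c r. hball c (ereal r) \<subseteq> tspan v \<longrightarrow>
              ereal r \<le> dist_set (range v) (tropH (\<lambda>i. ereal (a i))))))"
proof -
  note col = assms(1) and nz = assms(2) and row = assms(3)
  define A where "A = (\<lambda>i. ereal (a i))"
  define H where "H = tropH A"
  define \<delta> where "\<delta> = dist_set (range v) H"
  define \<rho> where "\<rho> = specT (opT v)"
  have Ar: "A \<in> rmax" unfolding A_def rmax_def by simp
  have d0: "0 \<le> \<delta>" unfolding \<delta>_def by (rule dset_nonneg[OF col nz])
  have F1A: "- \<delta> + A i \<le> opT v A i" for i
    unfolding \<delta>_def H_def by (rule F1[OF col Ar]) (use d0 in \<open>simp add: \<delta>_def H_def\<close>)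
  have Tsec: "opT v A i \<le> - \<delta> + A i" if "v k \<in> sector i a" "\<delta> \<le> dist_pt (v k) H" for i k
  proof -
    have vkr: "v k \<in> rmax" and sec: "\<forall>j. v k j + ereal (a j) \<le> v k i + ereal (a i)"
      using that(1) unfolding sector_def by auto
    obtain j1 where j1: "v k j1 \<noteq> -\<infinity>" using nz by blast
    have "v k j1 + ereal (a j1) \<noteq> -\<infinity>" using j1 by (cases "v k j1") auto
    then have "v k i \<noteq> -\<infinity>" using sec[rule_format, of j1] by auto
    moreover have "v k i \<noteq> \<infinity>" using vkr unfolding rmax_def by auto
    ultimately obtain vi where vi: "v k i = ereal vi" by (cases "v k i") auto
    show ?thesis unfolding A_def
      by (rule TB[where v=v and k=k and i=i and a=a, OF vkr vi sec]) (use that(2) d0 in \<open>simp_all add: H_def A_def\<close>)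
  qed
  have I12: "\<rho> = - \<delta> \<and> (\<forall>i. opT v A i = - \<delta> + A i)" if h: "opT v A = (\<lambda>i. \<rho> + A i)"
  proof -
    have "- \<delta> + A undefined \<le> \<rho> + A undefined" using F1A[of undefined] h by simp
    then have r1: "- \<delta> \<le> \<rho>" unfolding A_def by (simp add: ereal_add_le_add_iff2)
    have fin: "finite (range v)" by simp
    obtain x where x: "x \<in> range v" "\<delta> = dist_pt x H"
      using SUP_attain[OF fin, of "\<lambda>x. dist_pt x H"] unfolding \<delta>_def dist_set_def by auto
    then obtain k where k: "\<delta> = dist_pt (v k) H" by auto
    obtain i where i: "(SUP j. v k j + A j) = v k i + A i"
      using SUP_attain[of UNIV "\<lambda>j. v k j + A j"] by auto
    have "v k j + A j \<le> v k i + A i" for j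
      unfolding i[symmetric] by (rule SUP_upper) simp
    then have "v k j + ereal (a j) \<le> v k i + ereal (a i)" for j unfolding A_def by simp
    then have "v k \<in> sector i a" unfolding sector_def using col by auto
    then have "opT v A i \<le> - \<delta> + A i" using Tsec k by simp
    then have "\<rho> + A i \<le> - \<delta> + A i" using h by simp
    then have "\<rho> \<le> - \<delta>" unfolding A_def by (simp add: ereal_add_le_add_iff2)
    with r1 have "\<rho> = - \<delta>" by simp
    then show ?thesis using h by simp
  qed
  have I2T: "\<forall>i. opT v A i = - \<delta> + A i"
    if h: "\<forall>i. \<exists>k. v k \<in> sector i a \<and> dist_pt (v k) H = \<delta>"
  proof
    fix i
    obtain k where "v k \<in> sector i a" "dist_pt (v k) H = \<delta>" using h by blast
    then have "opT v A i \<le> - \<delta> + A i" using Tsec by simp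
    then show "opT v A i = - \<delta> + A i" using F1A[of i] by simp
  qed
  have dn: "- \<delta> \<noteq> \<infinity>" using d0 by (cases \<delta>) auto
  have Teq2': "\<forall>i. \<exists>k. v k \<in> sector i a \<and> dist_pt (v k) H = \<delta>"
    if "\<forall>i. opT v A i = - \<delta> + A i"
    using Teq2[OF col row, of a] d0 that unfolding \<delta>_def H_def A_def by blast
  have eqv: "opT v A = (\<lambda>i. \<rho> + A i) \<longleftrightarrow> (\<forall>i. \<exists>k. v k \<in> sector i a \<and> dist_pt (v k) H = \<delta>)"
  proof
    assume "opT v A = (\<lambda>i. \<rho> + A i)"
    then show "\<forall>i. \<exists>k. v k \<in> sector i a \<and> dist_pt (v k) H = \<delta>" using I12 Teq2' by blast
  next
    assume h2: "\<forall>i. \<exists>k. v k \<in> sector i a \<and> dist_pt (v k) H = \<delta>"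
    then have heq: "\<forall>i. opT v A i = - \<delta> + A i" by (rule I2T)
    have "\<rho> = - \<delta>" unfolding \<rho>_def
      by (rule specEq[where a=a, OF col row _ dn]) (use heq in \<open>simp add: A_def\<close>)
    then show "opT v A = (\<lambda>i. \<rho> + A i)" using heq by auto
  qed
  have conseq: "\<rho> = - \<delta>
         \<and> (\<forall>b\<in>rmax. b \<noteq> (\<lambda>_. -\<infinity>) \<longrightarrow> \<delta> \<le> dist_set (range v) (tropH b))
         \<and> hball (\<lambda>i. - a i) \<delta> \<subseteq> tspan v
         \<and> (\<forall>c r. hball c (ereal r) \<subseteq> tspan v \<longrightarrow> ereal r \<le> \<delta>)"
    if h1: "opT v A = (\<lambda>i. \<rho> + A i)"
  proof (intro conjI ballI impI allI)
    have r: "\<rho> = - \<delta>" and heq: "\<forall>i. opT v A i = - \<delta> + A i" using I12[OF h1] by auto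
    show "\<rho> = - \<delta>" by (rule r)
    have c2: "\<forall>i. \<exists>k. v k \<in> sector i a \<and> dist_pt (v k) H = \<delta>" using Teq2' heq by blast
    show "hball (\<lambda>i. - a i) \<delta> \<subseteq> tspan v"
      by (rule ball_in_span[OF col nz]) (use c2 in \<open>simp add: H_def A_def\<close>)
    fix c r assume "hball c (ereal r) \<subseteq> tspan v"
    moreover have heq': "\<forall>i. opT v (\<lambda>i. ereal (a i)) i = - \<delta> + ereal (a i)"
      using heq by (simp add: A_def)
    ultimately show "ereal r \<le> \<delta>"
      using span_ball_le[where a=a, OF col row d0 heq'] by blast
  next
    have heq: "\<forall>i. opT v A i = - \<delta> + A i" using I12[OF h1] by auto
    fix b :: "'n \<Rightarrow> ereal" assume br: "b \<in> rmax" and bn: "b \<noteq> (\<lambda>_. -\<infinity>)"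
    then obtain j0 where j0: "b j0 \<noteq> -\<infinity>" by auto
    have db0: "0 \<le> dist_set (range v) (tropH b)" by (rule dset_nonneg[OF col nz])
    have "- dist_set (range v) (tropH b) \<le> - \<delta>"
    proof (rule CW[where a=a, OF col row br j0])
      show "\<forall>i. - dist_set (range v) (tropH b) + b i \<le> opT v b i" using F1[OF col br db0] by blast
      show "\<forall>i. opT v (\<lambda>i. ereal (a i)) i \<le> - \<delta> + ereal (a i)" using heq unfolding A_def by simp
    qed
    then show "\<delta> \<le> dist_set (range v) (tropH b)" by simp
  qed
  show ?thesis using eqv conseq unfolding A_def H_def \<delta>_def \<rho>_def by blast
qed

end
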